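(* As operators on the tensor product of any three finite-dimensional spin representations of $U_q(\mathfrak{su}_2)$, $$Q_{23}:=1\otimes\Delta(Q)=\mathrm{Tr}_a\big(L^+_{a1}L^+_{a2}L^+_{a3}L^-_{a3}L^-_{a2}(L^+_{a1})^{-1}M_a\big),$$ where $Q=(q-q^{-1})^2FE+q^{2H+1}+q^{-2H-1}$.
   Context: $q$ generic complex, $U_q(\mathfrak{su}_2)$ generated by $E,F,q^H$ with $q^HE=qEq^H$, $q^HF=q^{-1}Fq^H$, $[E,F]=(q^{2H}-q^{-2H})/(q-q^{-1})$; coproduct $\Delta(E)=E\otimes q^{-H}+q^H\otimes E$, $\Delta(F)=F\otimes q^{-H}+q^H\otimes F$, $\Delta(q^H)=q^H\otimes q^H$. Auxiliary space $a\cong\mathbb{C}^2$ traced with $\mathrm{Tr}_a$. $L^-=\begin{pmatrix}q^H&0\\ \frac{q-q^{-1}}{q^{1/2}}E&q^{-H}\end{pmatrix}$, $L^+=\begin{pmatrix}q^H&\frac{q-q^{-1}}{q^{1/2}}F\\0&q^{-H}\end{pmatrix}$; $L^\pm_{ai}$ is the matrix on space $a$ with entries in the $i$-th tensor factor; $M_a=\mathrm{diag}(q,q^{-1})$ on space $a$. *)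

theory Defs
  imports Complex_Main
begin

(* Spin representations of U_q(su_2), concretely.
   Spin n/2 representation: basis e_0..e_n, e_k has weight m = k - n/2.
   s is a fixed square root of q (q^(1/2)), so q^H e_k = s^(2k-n) e_k. *)

type_synonym op1 = "nat \<Rightarrow> nat \<Rightarrow> complex"
type_synonym idx3 = "nat \<times> nat \<times> nat"
type_synonym op3 = "idx3 \<Rightarrow> idx3 \<Rightarrow> complex"
type_synonym idxA = "nat \<times> idx3"
type_synonym opA = "idxA \<Rightarrow> idxA \<Rightarrow> complex"

definition qnum :: "complex \<Rightarrow> int \<Rightarrow> complex" where
  "qnum q x = (q powi x - q powi (-x)) / (q - inverse q)"

text \<open>q^(e H) on the spin n/2 representation (e an integer exponent).\<close>
definition Kop :: "complex \<Rightarrow> nat \<Rightarrow> int \<Rightarrow> op1" where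
  "Kop s n e i j = (if i = j then s powi (e * (2 * int i - int n)) else 0)"

text \<open>E e_j = e_(j+1) (e_n is killed since e_(n+1) lies outside the space).\<close>
definition Eop :: "nat \<Rightarrow> op1" where
  "Eop n i j = (if i = Suc j then 1 else 0)"

definition Fop :: "complex \<Rightarrow> nat \<Rightarrow> op1" where
  "Fop q n i j = (if j = Suc i then qnum q (int j) * qnum q (int n - int j + 1) else 0)"

definition Jset :: "idx3 \<Rightarrow> idx3 set" where
  "Jset ns = (case ns of (n1, n2, n3) \<Rightarrow> {0..n1} \<times> {0..n2} \<times> {0..n3})"

definition Aset :: "idx3 \<Rightarrow> idxA set" where
  "Aset ns = {0..1::nat} \<times> Jset ns"

definition omult :: "'i set \<Rightarrow> ('i \<Rightarrow> 'i \<Rightarrow> complex) \<Rightarrow> ('i \<Rightarrow> 'i \<Rightarrow> complex) \<Rightarrow> ('i \<Rightarrow> 'i \<Rightarrow> complex)" where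
  "omult I A B x y = (\<Sum>z\<in>I. A x z * B z y)"

definition oid :: "'i set \<Rightarrow> ('i \<Rightarrow> 'i \<Rightarrow> complex)" where
  "oid I x y = (if x = y \<and> x \<in> I then 1 else 0)"

definition oadd :: "('i \<Rightarrow> 'i \<Rightarrow> complex) \<Rightarrow> ('i \<Rightarrow> 'i \<Rightarrow> complex) \<Rightarrow> ('i \<Rightarrow> 'i \<Rightarrow> complex)" where
  "oadd A B x y = A x y + B x y"

definition osc :: "complex \<Rightarrow> ('i \<Rightarrow> 'i \<Rightarrow> complex) \<Rightarrow> ('i \<Rightarrow> 'i \<Rightarrow> complex)" where
  "osc c A x y = c * A x y"

definition oinv :: "'i set \<Rightarrow> ('i \<Rightarrow> 'i \<Rightarrow> complex) \<Rightarrow> ('i \<Rightarrow> 'i \<Rightarrow> complex)" where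
  "oinv I A = (THE B. (\<forall>x y. B x y \<noteq> 0 \<longrightarrow> x \<in> I \<and> y \<in> I)
                   \<and> omult I B A = oid I \<and> omult I A B = oid I)"

definition emb1 :: "op1 \<Rightarrow> op3" where
  "emb1 A x y = (case x of (a, b, c) \<Rightarrow> case y of (a', b', c') \<Rightarrow>
      A a a' * (if b = b' \<and> c = c' then 1 else 0))"
definition emb2 :: "op1 \<Rightarrow> op3" where
  "emb2 A x y = (case x of (a, b, c) \<Rightarrow> case y of (a', b', c') \<Rightarrow>
      A b b' * (if a = a' \<and> c = c' then 1 else 0))"
definition emb3 :: "op1 \<Rightarrow> op3" where
  "emb3 A x y = (case x of (a, b, c) \<Rightarrow> case y of (a', b', c') \<Rightarrow>
      A c c' * (if a = a' \<and> b = b' then 1 else 0))"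

text \<open>A 2x2 matrix (rows/columns 0,1 of auxiliary space a) with entries in op3,
  viewed as an operator on a (x) V1 (x) V2 (x) V3.\<close>
definition aux :: "(nat \<Rightarrow> nat \<Rightarrow> op3) \<Rightarrow> opA" where
  "aux m x y = (case x of (a, u) \<Rightarrow> case y of (b, v) \<Rightarrow> m a b u v)"

definition trA :: "opA \<Rightarrow> op3" where
  "trA A u v = (\<Sum>a\<in>{0..1::nat}. A (a, u) (a, v))"

definition Lplus :: "complex \<Rightarrow> complex \<Rightarrow> (op1 \<Rightarrow> op3) \<Rightarrow> nat \<Rightarrow> opA" where
  "Lplus q s emb n = aux (\<lambda>a b.
     if a = 0 \<and> b = 0 then emb (Kop s n 1)
     else if a = 0 \<and> b = 1 then osc ((q - inverse q) / s) (emb (Fop q n))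
     else if a = 1 \<and> b = 1 then emb (Kop s n (-1))
     else (\<lambda>_ _. 0))"

definition Lminus :: "complex \<Rightarrow> complex \<Rightarrow> (op1 \<Rightarrow> op3) \<Rightarrow> nat \<Rightarrow> opA" where
  "Lminus q s emb n = aux (\<lambda>a b.
     if a = 0 \<and> b = 0 then emb (Kop s n 1)
     else if a = 1 \<and> b = 0 then osc ((q - inverse q) / s) (emb (Eop n))
     else if a = 1 \<and> b = 1 then emb (Kop s n (-1))
     else (\<lambda>_ _. 0))"

definition Ma :: "complex \<Rightarrow> opA" where
  "Ma q = aux (\<lambda>a b. if a = b then osc (if a = 0 then q else inverse q) (\<lambda>u v. if u = v then 1 else 0)
                     else (\<lambda>_ _. 0))"

text \<open>1 (x) Delta(Q) on V1 (x) V2 (x) V3, with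
  Q = (q-q^-1)^2 F E + q^(2H+1) + q^(-2H-1), Delta extended multiplicatively from
  Delta(E) = E (x) q^-H + q^H (x) E, Delta(F) = F (x) q^-H + q^H (x) F, Delta(q^H) = q^H (x) q^H.\<close>
definition Q23 :: "complex \<Rightarrow> complex \<Rightarrow> idx3 \<Rightarrow> op3" where
  "Q23 q s ns = (case ns of (n1, n2, n3) \<Rightarrow>
     let J = Jset ns;
         K = omult J (emb2 (Kop s n2 1)) (emb3 (Kop s n3 1));
         Ki = omult J (emb2 (Kop s n2 (-1))) (emb3 (Kop s n3 (-1)));
         DE = oadd (omult J (emb2 (Eop n2)) (emb3 (Kop s n3 (-1))))
              (omult J (emb2 (Kop s n2 1)) (emb3 (Eop n3)));
         DF = oadd (omult J (emb2 (Fop q n2)) (emb3 (Kop s n3 (-1))))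
              (omult J (emb2 (Kop s n2 1)) (emb3 (Fop q n3)))
     in oadd (oadd (osc ((q - inverse q)^2) (omult J DF DE)) (osc q (omult J K K)))
           (osc (inverse q) (omult J Ki Ki)))"

definition transfer_RHS :: "complex \<Rightarrow> complex \<Rightarrow> idx3 \<Rightarrow> op3" where
  "transfer_RHS q s ns = (case ns of (n1, n2, n3) \<Rightarrow>
     let I = Aset ns; m = omult I in
     trA (m (Lplus q s emb1 n1) (m (Lplus q s emb2 n2) (m (Lplus q s emb3 n3)
          (m (Lminus q s emb3 n3) (m (Lminus q s emb2 n2)
          (m (oinv I (Lplus q s emb1 n1)) (Ma q))))))))"

end

theory Submission
  imports Defs
begin


definition rs :: "'i set \<Rightarrow> ('i \<Rightarrow> 'i \<Rightarrow> complex) \<Rightarrow> ('i \<Rightarrow> 'i \<Rightarrow> complex)" where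
  "rs I A x y = (if x \<in> I \<and> y \<in> I then A x y else 0)"
definition dl :: op1 where "dl i j = (if i = j then 1 else 0)"
definition tens :: "op1 \<Rightarrow> op1 \<Rightarrow> op1 \<Rightarrow> op3" where
  "tens A B C x y = (case x of (a, b, c) \<Rightarrow> case y of (a', b', c') \<Rightarrow> A a a' * B b b' * C c c')"
definition mm :: "idx3 set \<Rightarrow> (nat \<Rightarrow> nat \<Rightarrow> op3) \<Rightarrow> (nat \<Rightarrow> nat \<Rightarrow> op3) \<Rightarrow> nat \<Rightarrow> nat \<Rightarrow> op3" where
  "mm J m1 m2 a c = oadd (omult J (m1 a 0) (m2 0 c)) (omult J (m1 a 1) (m2 1 c))"

lemma sum_times: "sum f (A \<times> B) = (\<Sum>a\<in>A. \<Sum>b\<in>B. f (a, b))"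
  by (simp add: sum.cartesian_product)

lemma omult_assoc: "omult I (omult I A B) C = omult I A (omult I B C)"
proof (rule ext, rule ext)
  fix x y
  have "omult I (omult I A B) C x y = (\<Sum>z\<in>I. \<Sum>w\<in>I. A x w * B w z * C z y)"
    by (simp add: omult_def sum_distrib_right)
  also have "\<dots> = (\<Sum>w\<in>I. \<Sum>z\<in>I. A x w * B w z * C z y)"
    by (rule sum.swap)
  also have "\<dots> = omult I A (omult I B C) x y"
    by (simp add: omult_def sum_distrib_left mult.assoc)
  finally show "omult I (omult I A B) C x y = omult I A (omult I B C) x y" .
qed

lemma omult_oadd_l: "omult I (oadd A B) C = oadd (omult I A C) (omult I B C)"
  by (rule ext)+ (simp add: omult_def oadd_def distrib_right sum.distrib)
lemma omult_oadd_r: "omult I C (oadd A B) = oadd (omult I C A) (omult I C B)"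
  by (rule ext)+ (simp add: omult_def oadd_def distrib_left sum.distrib)
lemma omult_osc_l: "omult I (osc c A) B = osc c (omult I A B)"
  by (rule ext)+ (simp add: omult_def osc_def sum_distrib_left mult.assoc)
lemma omult_osc_r: "omult I A (osc c B) = osc c (omult I A B)"
  by (rule ext)+ (simp add: omult_def osc_def sum_distrib_left mult.assoc mult.left_commute)
lemma omult_0_l: "omult I (\<lambda>_ _. 0) B = (\<lambda>_ _. 0)"
  by (rule ext)+ (simp add: omult_def)
lemma omult_0_r: "omult I B (\<lambda>_ _. 0) = (\<lambda>_ _. 0)"
  by (rule ext)+ (simp add: omult_def)
lemma oadd_0_l: "oadd (\<lambda>_ _. 0) B = B" by (rule ext)+ (simp add: oadd_def)
lemma oadd_0_r: "oadd B (\<lambda>_ _. 0) = B" by (rule ext)+ (simp add: oadd_def)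
lemma osc_osc: "osc c (osc d A) = osc (c * d) A" by (rule ext)+ (simp add: osc_def)

lemma rs_omult: "rs I (omult I A B) = omult I (rs I A) (rs I B)"
  by (rule ext)+ (auto simp add: omult_def rs_def intro!: sum.cong)
lemma rs_oadd: "rs I (oadd A B) = oadd (rs I A) (rs I B)"
  by (rule ext)+ (auto simp add: oadd_def rs_def)
lemma rs_osc: "rs I (osc c A) = osc c (rs I A)"
  by (rule ext)+ (auto simp add: osc_def rs_def)
lemma rs_0: "rs I (\<lambda>_ _. 0) = (\<lambda>_ _. 0)"
  by (rule ext)+ (auto simp add: rs_def)
lemma rs_rs: "rs I (rs I A) = rs I A"
  by (rule ext)+ (auto simp add: rs_def)

lemma rs_emb1: "rs (N1 \<times> N2 \<times> N3) (emb1 A) = tens (rs N1 A) (rs N2 dl) (rs N3 dl)"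
  by (rule ext)+ (auto simp add: rs_def emb1_def tens_def dl_def split: prod.splits)
lemma rs_emb2: "rs (N1 \<times> N2 \<times> N3) (emb2 A) = tens (rs N1 dl) (rs N2 A) (rs N3 dl)"
  by (rule ext)+ (auto simp add: rs_def emb2_def tens_def dl_def split: prod.splits)
lemma rs_emb3: "rs (N1 \<times> N2 \<times> N3) (emb3 A) = tens (rs N1 dl) (rs N2 dl) (rs N3 A)"
  by (rule ext)+ (auto simp add: rs_def emb3_def tens_def dl_def split: prod.splits)
lemma rs_tens: "rs (N1 \<times> N2 \<times> N3) (tens A B C) = tens (rs N1 A) (rs N2 B) (rs N3 C)"
  by (rule ext)+ (auto simp add: rs_def tens_def split: prod.splits)
lemma rs_id3: "rs (N1 \<times> N2 \<times> N3) (\<lambda>u v. if u = v then 1 else 0) = tens (rs N1 dl) (rs N2 dl) (rs N3 dl)"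
  by (rule ext)+ (auto simp add: rs_def tens_def dl_def split: prod.splits)

lemma tens_mult:
  assumes "finite N1" "finite N2" "finite N3"
  shows "omult (N1 \<times> N2 \<times> N3) (tens A B C) (tens A' B' C') = tens (omult N1 A A') (omult N2 B B') (omult N3 C C')"
proof (rule ext, rule ext)
  fix x y :: idx3
  obtain a b c where x: "x = (a,b,c)" by (cases x) auto
  obtain a' b' c' where y: "y = (a',b',c')" by (cases y) auto
  have "omult (N1 \<times> N2 \<times> N3) (tens A B C) (tens A' B' C') x y
     = (\<Sum>i\<in>N1. \<Sum>j\<in>N2. \<Sum>k\<in>N3. (A a i * A' i a') * ((B b j * B' j b') * (C c k * C' k c')))"
    unfolding omult_def x y using assms
    by (simp add: sum_times tens_def mult_ac)
  also have "\<dots> = omult N1 A A' a a' * (omult N2 B B' b b' * omult N3 C C' c c')"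
    unfolding omult_def sum_product by (simp add: sum_distrib_left)
  finally show "omult (N1 \<times> N2 \<times> N3) (tens A B C) (tens A' B' C') x y = tens (omult N1 A A') (omult N2 B B') (omult N3 C C') x y"
    by (simp add: x y tens_def mult_ac)
qed

lemma tens_osc1: "tens (osc c A) B C = osc c (tens A B C)"
  by (rule ext)+ (simp add: tens_def osc_def split: prod.splits)
lemma tens_osc2: "tens A (osc c B) C = osc c (tens A B C)"
  by (rule ext)+ (simp add: tens_def osc_def split: prod.splits)
lemma tens_osc3: "tens A B (osc c C) = osc c (tens A B C)"
  by (rule ext)+ (simp add: tens_def osc_def split: prod.splits)

lemma omult_aux: "omult ({0..1::nat} \<times> J) (aux m1) (aux m2) = aux (mm J m1 m2)"
proof (rule ext, rule ext)
  fix x y :: idxA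
  obtain a u where x: "x = (a,u)" by (cases x) auto
  obtain c w where y: "y = (c,w)" by (cases y) auto
  have e: "{0..1::nat} = {0,1}" by auto
  show "omult ({0..1::nat} \<times> J) (aux m1) (aux m2) x y = aux (mm J m1 m2) x y"
    unfolding x y omult_def aux_def mm_def oadd_def
    by (simp add: sum_times e)
qed

lemma cont: "omult I A B = C \<Longrightarrow> omult I A (omult I B X) = omult I C X"
  by (simp add: omult_assoc[symmetric])


lemma diag_l: "finite N \<Longrightarrow> omult N (rs N (\<lambda>i j. if i = j then d i else 0)) B x y = (if x \<in> N then d x * B x y else 0)"
proof -
  assume f: "finite N"
  have "omult N (rs N (\<lambda>i j. if i = j then d i else 0)) B x y = (\<Sum>z\<in>N. if x = z then (if x \<in> N then d x * B x y else 0) else 0)"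
    unfolding omult_def rs_def by (rule sum.cong) auto
  thus ?thesis using f by simp
qed
lemma diag_r: "finite N \<Longrightarrow> omult N B (rs N (\<lambda>i j. if i = j then d i else 0)) x y = (if y \<in> N then B x y * d y else 0)"
proof -
  assume f: "finite N"
  have "omult N B (rs N (\<lambda>i j. if i = j then d i else 0)) x y = (\<Sum>z\<in>N. if y = z then (if y \<in> N then B x y * d y else 0) else 0)"
    unfolding omult_def rs_def by (rule sum.cong) auto
  thus ?thesis using f by simp
qed

lemma powi_cancel: "(s::complex) \<noteq> 0 \<Longrightarrow> s powi a * s powi (- a) = 1"
  by (simp add: power_int_minus)
lemma powi_cancel': "(s::complex) \<noteq> 0 \<Longrightarrow> s powi (int n - 2 * int x) * s powi (2 * int x - int n) = 1"
  using powi_cancel[of s "int n - 2 * int x"] by simp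
lemma powi_cancel'': "(s::complex) \<noteq> 0 \<Longrightarrow> s powi (2 * int x - int n) * s powi (int n - 2 * int x) = 1"
  using powi_cancel[of s "2 * int x - int n"] by simp

lemma Kop_eq: "Kop s n e = (\<lambda>i j. if i = j then s powi (e * (2 * int i - int n)) else 0)"
  by (rule ext)+ (simp add: Kop_def)
lemma dl_eq: "dl = (\<lambda>i j. if i = j then 1 else 0)"
  by (rule ext)+ (simp add: dl_def)

lemma dl_l: "finite N \<Longrightarrow> omult N (rs N dl) (rs N A) = rs N A"
  by (rule ext)+ (simp add: dl_eq diag_l, simp add: rs_def)
lemma dl_r: "finite N \<Longrightarrow> omult N (rs N A) (rs N dl) = rs N A"
  by (rule ext)+ (simp add: dl_eq diag_r, simp add: rs_def)

lemma KKi: "s \<noteq> 0 \<Longrightarrow> omult {0..n} (rs {0..n} (Kop s n 1)) (rs {0..n} (Kop s n (-1))) = rs {0..n} dl"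
  apply (rule ext)+
  apply (simp add: Kop_eq diag_l)
  apply (simp add: rs_def dl_def powi_cancel' powi_cancel'')
  done
lemma KiK: "s \<noteq> 0 \<Longrightarrow> omult {0..n} (rs {0..n} (Kop s n (-1))) (rs {0..n} (Kop s n 1)) = rs {0..n} dl"
  apply (rule ext)+
  apply (simp add: Kop_eq diag_l)
  apply (simp add: rs_def dl_def powi_cancel' powi_cancel'')
  done

lemma Fop_nz: "Fop q n x y \<noteq> 0 \<Longrightarrow> y = Suc x"
  by (simp add: Fop_def split: if_splits)

lemma KF: assumes "s \<noteq> 0" "s ^ 2 = q"
  shows "omult {0..n} (rs {0..n} (Kop s n 1)) (rs {0..n} (Fop q n)) = osc (inverse q) (omult {0..n} (rs {0..n} (Fop q n)) (rs {0..n} (Kop s n 1)))"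
proof (rule ext, rule ext)
  fix x y
  have q0: "q \<noteq> 0" using assms by auto
  show "omult {0..n} (rs {0..n} (Kop s n 1)) (rs {0..n} (Fop q n)) x y = osc (inverse q) (omult {0..n} (rs {0..n} (Fop q n)) (rs {0..n} (Kop s n 1))) x y"
  proof (cases "Fop q n x y = 0")
    case True thus ?thesis by (simp add: Kop_eq diag_l diag_r osc_def rs_def)
  next
    case False
    hence y: "y = Suc x" by (rule Fop_nz)
    have "s powi (2 * int (Suc x) - int n) = s powi ((2 * int x - int n) + 2)"
      by (simp add: algebra_simps)
    also have "\<dots> = s powi (2 * int x - int n) * s powi 2"
      using assms(1) by (rule power_int_add[OF disjI1])
    also have "s powi 2 = q" using assms(2) by simp
    finally show ?thesis using q0 by (simp add: Kop_eq diag_l diag_r osc_def rs_def y)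
  qed
qed

lemma KiF: assumes "s \<noteq> 0" "s ^ 2 = q"
  shows "omult {0..n} (rs {0..n} (Kop s n (-1))) (rs {0..n} (Fop q n)) = osc q (omult {0..n} (rs {0..n} (Fop q n)) (rs {0..n} (Kop s n (-1))))"
proof (rule ext, rule ext)
  fix x y
  have q0: "q \<noteq> 0" using assms by auto
  show "omult {0..n} (rs {0..n} (Kop s n (-1))) (rs {0..n} (Fop q n)) x y = osc q (omult {0..n} (rs {0..n} (Fop q n)) (rs {0..n} (Kop s n (-1)))) x y"
  proof (cases "Fop q n x y = 0")
    case True thus ?thesis by (simp add: Kop_eq diag_l diag_r osc_def rs_def)
  next
    case False
    hence y: "y = Suc x" by (rule Fop_nz)
    have "s powi (-1 * (2 * int x - int n)) = s powi ((-1 * (2 * int (Suc x) - int n)) + 2)"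
      by (simp add: algebra_simps)
    also have "\<dots> = s powi (-1 * (2 * int (Suc x) - int n)) * s powi 2"
      using assms(1) by (rule power_int_add[OF disjI1])
    also have "s powi 2 = q" using assms(2) by simp
    finally show ?thesis using q0 by (simp add: Kop_eq diag_l diag_r osc_def rs_def y)
  qed
qed



definition Binv :: "complex \<Rightarrow> complex \<Rightarrow> nat \<Rightarrow> nat \<Rightarrow> nat \<Rightarrow> nat \<Rightarrow> nat \<Rightarrow> op3" where
 "Binv q s n1 n2 n3 a b = (if a = 0 \<and> b = 0 then tens (rs {0..n1} (Kop s n1 (-1))) (rs {0..n2} dl) (rs {0..n3} dl)
   else if a = 0 \<and> b = 1 then osc (- ((q - inverse q) / s * q)) (tens (rs {0..n1} (Fop q n1)) (rs {0..n2} dl) (rs {0..n3} dl))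
   else if a = 1 \<and> b = 1 then tens (rs {0..n1} (Kop s n1 1)) (rs {0..n2} dl) (rs {0..n3} dl) else (\<lambda>_ _. 0))"

lemma dl_l_c: "finite N \<Longrightarrow> omult N (rs N dl) (omult N (rs N A) X) = omult N (rs N A) X"
  by (simp add: omult_assoc[symmetric] dl_l)
lemma KKi_c: "s \<noteq> 0 \<Longrightarrow> omult {0..n} (rs {0..n} (Kop s n 1)) (omult {0..n} (rs {0..n} (Kop s n (-1))) X) = omult {0..n} (rs {0..n} dl) X"
  by (simp add: omult_assoc[symmetric] KKi)
lemma KiK_c: "s \<noteq> 0 \<Longrightarrow> omult {0..n} (rs {0..n} (Kop s n (-1))) (omult {0..n} (rs {0..n} (Kop s n 1)) X) = omult {0..n} (rs {0..n} dl) X"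
  by (simp add: omult_assoc[symmetric] KiK)
lemma KF_c: "s \<noteq> 0 \<Longrightarrow> s ^ 2 = q \<Longrightarrow> omult {0..n} (rs {0..n} (Kop s n 1)) (omult {0..n} (rs {0..n} (Fop q n)) X) = osc (inverse q) (omult {0..n} (rs {0..n} (Fop q n)) (omult {0..n} (rs {0..n} (Kop s n 1)) X))"
  by (simp add: omult_assoc[symmetric] KF omult_osc_l)
lemma KiF_c: "s \<noteq> 0 \<Longrightarrow> s ^ 2 = q \<Longrightarrow> omult {0..n} (rs {0..n} (Kop s n (-1))) (omult {0..n} (rs {0..n} (Fop q n)) X) = osc q (omult {0..n} (rs {0..n} (Fop q n)) (omult {0..n} (rs {0..n} (Kop s n (-1))) X))"
  by (simp add: omult_assoc[symmetric] KiF omult_osc_l)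

lemma trA_aux: "u \<in> J \<Longrightarrow> v \<in> J \<Longrightarrow> trA (aux m) u v = rs J (oadd (m 0 0) (m 1 1)) u v"
  by (simp add: trA_def aux_def rs_def oadd_def)
lemma rs_pt: "u \<in> J \<Longrightarrow> v \<in> J \<Longrightarrow> A u v = rs J A u v"
  by (simp add: rs_def)

lemma Jset_eq: "Jset (n1, n2, n3) = {0..n1} \<times> {0..n2} \<times> {0..n3}" by (simp add: Jset_def)

lemma tens_pt: "tens A B C (a, b, c) (a', b', c') = A a a' * B b b' * C c c'"
  by (simp add: tens_def)

lemmas pushs = mm_def omult_0_l omult_0_r oadd_0_l oadd_0_r rs_omult rs_oadd rs_osc rs_0 rs_rs
  rs_emb1 rs_emb2 rs_emb3 rs_tens rs_id3 Jset_eq tens_mult tens_osc1 tens_osc2 tens_osc3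
  omult_oadd_l omult_oadd_r omult_osc_l omult_osc_r osc_osc omult_assoc
  Binv_def if_True if_False zero_neq_one one_neq_zero simp_thms finite_atLeastAtMost

lemma main:
  fixes q s :: complex
  assumes s: "s ^ 2 = q" and s0: "s \<noteq> 0"
  and inv: "oinv (Aset (n1, n2, n3)) (Lplus q s emb1 n1) = aux (Binv q s n1 n2 n3)"
  and u: "(a, b, c) \<in> Jset (n1, n2, n3)" and v: "(a', b', c') \<in> Jset (n1, n2, n3)"
  shows "Q23 q s (n1, n2, n3) (a, b, c) (a', b', c') = transfer_RHS q s (n1, n2, n3) (a, b, c) (a', b', c')"
proof -
  have R: "transfer_RHS q s (n1, n2, n3) (a, b, c) (a', b', c') = 
    trA (aux (mm (Jset (n1, n2, n3)) (\<lambda>a b.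
     if a = 0 \<and> b = 0 then emb1 (Kop s n1 1)
     else if a = 0 \<and> b = 1 then osc ((q - inverse q) / s) (emb1 (Fop q n1))
     else if a = 1 \<and> b = 1 then emb1 (Kop s n1 (-1))
     else (\<lambda>_ _. 0)) (mm (Jset (n1, n2, n3)) (\<lambda>a b.
     if a = 0 \<and> b = 0 then emb2 (Kop s n2 1)
     else if a = 0 \<and> b = 1 then osc ((q - inverse q) / s) (emb2 (Fop q n2))
     else if a = 1 \<and> b = 1 then emb2 (Kop s n2 (-1))
     else (\<lambda>_ _. 0)) (mm (Jset (n1, n2, n3)) (\<lambda>a b.
     if a = 0 \<and> b = 0 then emb3 (Kop s n3 1)
     else if a = 0 \<and> b = 1 then osc ((q - inverse q) / s) (emb3 (Fop q n3))
     else if a = 1 \<and> b = 1 then emb3 (Kop s n3 (-1))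
     else (\<lambda>_ _. 0)) (mm (Jset (n1, n2, n3)) (\<lambda>a b.
     if a = 0 \<and> b = 0 then emb3 (Kop s n3 1)
     else if a = 1 \<and> b = 0 then osc ((q - inverse q) / s) (emb3 (Eop n3))
     else if a = 1 \<and> b = 1 then emb3 (Kop s n3 (-1))
     else (\<lambda>_ _. 0)) (mm (Jset (n1, n2, n3)) (\<lambda>a b.
     if a = 0 \<and> b = 0 then emb2 (Kop s n2 1)
     else if a = 1 \<and> b = 0 then osc ((q - inverse q) / s) (emb2 (Eop n2))
     else if a = 1 \<and> b = 1 then emb2 (Kop s n2 (-1))
     else (\<lambda>_ _. 0)) (mm (Jset (n1, n2, n3)) (Binv q s n1 n2 n3) 
     (\<lambda>a b. if a = b then osc (if a = 0 then q else inverse q) (\<lambda>u v. if u = v then 1 else 0)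
                     else (\<lambda>_ _. 0)))))))))  (a, b, c) (a', b', c')"
    unfolding transfer_RHS_def Let_def prod.case inv
    unfolding Aset_def Lplus_def Lminus_def Ma_def
    by (simp only: omult_aux)
  have q0: "q \<noteq> 0" using s s0 by auto
  have c2: "q * ((q - inverse q) / s) * ((q - inverse q) / s) = (q - inverse q) ^ 2"
  proof -
    have "q * ((q - inverse q) / s) * ((q - inverse q) / s) = (q - inverse q) ^ 2 * (q / s ^ 2)"
      by (simp add: power2_eq_square field_simps)
    thus ?thesis using s q0 by simp
  qed
  have c3: "inverse q * (- ((q - inverse q) / s * q)) * ((q - inverse q) / s) * q = - ((q - inverse q) ^ 2)"
  proof -
    have "inverse q * (- ((q - inverse q) / s * q)) * ((q - inverse q) / s) * q = - (q * ((q - inverse q) / s) * ((q - inverse q) / s))"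
      using q0 s0 by (simp add: field_simps)
    thus ?thesis by (simp only: c2)
  qed
  show ?thesis
    unfolding R
    apply (subst trA_aux[OF u v])
    apply (subst rs_pt[OF u v, where A="Q23 q s (n1, n2, n3)"])
    apply (simp only: pushs Q23_def Let_def prod.case)
    apply (simp only: dl_l dl_l_c dl_r KKi_c[OF s0] KiK_c[OF s0] KKi[OF s0] KiK[OF s0] KF[OF s0 s] KF_c[OF s0 s]
       KiF[OF s0 s] KiF_c[OF s0 s] finite_atLeastAtMost omult_osc_l omult_osc_r osc_osc tens_osc1 tens_osc2 tens_osc3)
    apply (simp only: oadd_def osc_def tens_pt c2 c3)
    apply (simp add: algebra_simps)
    done
qed



lemma oid_r: "finite I \<Longrightarrow> (\<forall>x y. B x y \<noteq> 0 \<longrightarrow> x \<in> I \<and> y \<in> I) \<Longrightarrow> omult I B (oid I) = B"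
proof (rule ext, rule ext)
  fix x y assume f: "finite I" and sp: "\<forall>x y. B x y \<noteq> 0 \<longrightarrow> x \<in> I \<and> y \<in> I"
  have "omult I B (oid I) x y = (\<Sum>z\<in>I. if y = z then (if y \<in> I then B x y else 0) else 0)"
    unfolding omult_def oid_def by (rule sum.cong) auto
  also have "\<dots> = B x y" using f sp by auto
  finally show "omult I B (oid I) x y = B x y" .
qed
lemma oid_l: "finite I \<Longrightarrow> (\<forall>x y. B x y \<noteq> 0 \<longrightarrow> x \<in> I \<and> y \<in> I) \<Longrightarrow> omult I (oid I) B = B"
proof (rule ext, rule ext)
  fix x y assume f: "finite I" and sp: "\<forall>x y. B x y \<noteq> 0 \<longrightarrow> x \<in> I \<and> y \<in> I"
  have "omult I (oid I) B x y = (\<Sum>z\<in>I. if x = z then (if x \<in> I then B x y else 0) else 0)"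
    unfolding omult_def oid_def by (rule sum.cong) auto
  also have "\<dots> = B x y" using f sp by auto
  finally show "omult I (oid I) B x y = B x y" .
qed

lemma om_row0: "(\<forall>z\<in>I. A x z = 0) \<Longrightarrow> omult I A B x y = 0"
  by (simp add: omult_def)
lemma om_col0: "(\<forall>z\<in>I. B z y = 0) \<Longrightarrow> omult I A B x y = 0"
  by (simp add: omult_def)

lemma finite_Aset: "finite (Aset (n1, n2, n3))"
  by (simp add: Aset_def Jset_def)

lemma L1_row: "z \<in> Aset (n1, n2, n3) \<Longrightarrow> x \<notin> Aset (n1, n2, n3) \<Longrightarrow> Lplus q s emb1 n1 x z = 0"
  by (cases x; cases z) (auto simp: Lplus_def aux_def emb1_def Kop_def Fop_def osc_def Aset_def Jset_def)
lemma Fop_col: "i \<le> n \<Longrightarrow> \<not> j \<le> n \<Longrightarrow> Fop q n i j = 0"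
proof (cases "j = Suc i")
  case True
  assume "i \<le> n" "\<not> j \<le> n"
  hence "i = n" using True by simp
  thus ?thesis using True by (simp add: Fop_def qnum_def)
qed (simp add: Fop_def)

lemma L1_col: "z \<in> Aset (n1, n2, n3) \<Longrightarrow> y \<notin> Aset (n1, n2, n3) \<Longrightarrow> Lplus q s emb1 n1 z y = 0"
  by (cases y; cases z) (auto simp: Lplus_def aux_def emb1_def Kop_def Fop_col osc_def Aset_def Jset_def)
lemma B_supp: "\<forall>x y. aux (Binv q s n1 n2 n3) x y \<noteq> 0 \<longrightarrow> x \<in> Aset (n1, n2, n3) \<and> y \<in> Aset (n1, n2, n3)"
  by (auto simp: Binv_def aux_def tens_def rs_def osc_def Aset_def Jset_def split: if_splits)


lemmas words = dl_l dl_l_c dl_r KKi_c KiK_c KKi KiK KF KF_c KiF KiF_c finite_atLeastAtMost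
  omult_osc_l omult_osc_r osc_osc tens_osc1 tens_osc2 tens_osc3

lemma P_pt:
  fixes q s :: complex
  assumes s: "s ^ 2 = q" and s0: "s \<noteq> 0" and ab: "a \<le> 1" "b \<le> 1"
  and u: "(u1, u2, u3) \<in> Jset (n1, n2, n3)" and v: "(v1, v2, v3) \<in> Jset (n1, n2, n3)"
  shows "omult (Aset (n1, n2, n3)) (aux (Binv q s n1 n2 n3)) (Lplus q s emb1 n1) (a, (u1, u2, u3)) (b, (v1, v2, v3))
          = oid (Aset (n1, n2, n3)) (a, (u1, u2, u3)) (b, (v1, v2, v3))"
   and "omult (Aset (n1, n2, n3)) (Lplus q s emb1 n1) (aux (Binv q s n1 n2 n3)) (a, (u1, u2, u3)) (b, (v1, v2, v3))
          = oid (Aset (n1, n2, n3)) (a, (u1, u2, u3)) (b, (v1, v2, v3))"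
proof -
  have q0: "q \<noteq> 0" using s s0 by auto
  have a: "a = 0 \<or> a = 1" and b: "b = 0 \<or> b = 1" using ab by auto
  have uv: "u1 \<le> n1" "u2 \<le> n2" "u3 \<le> n3" "v1 \<le> n1" "v2 \<le> n2" "v3 \<le> n3"
    using u v by (auto simp: Jset_def)
  have e1: "omult (Aset (n1, n2, n3)) (aux (Binv q s n1 n2 n3)) (Lplus q s emb1 n1) (a, (u1, u2, u3)) (b, (v1, v2, v3))
    = rs (Jset (n1, n2, n3)) (mm (Jset (n1, n2, n3)) (Binv q s n1 n2 n3) (\<lambda>a b.
     if a = 0 \<and> b = 0 then emb1 (Kop s n1 1)
     else if a = 0 \<and> b = 1 then osc ((q - inverse q) / s) (emb1 (Fop q n1))
     else if a = 1 \<and> b = 1 then emb1 (Kop s n1 (-1))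
     else (\<lambda>_ _. 0)) a b) (u1, u2, u3) (v1, v2, v3)"
    unfolding Aset_def Lplus_def omult_aux aux_def prod.case by (rule rs_pt[OF u v])
  have e2: "omult (Aset (n1, n2, n3)) (Lplus q s emb1 n1) (aux (Binv q s n1 n2 n3)) (a, (u1, u2, u3)) (b, (v1, v2, v3))
    = rs (Jset (n1, n2, n3)) (mm (Jset (n1, n2, n3)) (\<lambda>a b.
     if a = 0 \<and> b = 0 then emb1 (Kop s n1 1)
     else if a = 0 \<and> b = 1 then osc ((q - inverse q) / s) (emb1 (Fop q n1))
     else if a = 1 \<and> b = 1 then emb1 (Kop s n1 (-1))
     else (\<lambda>_ _. 0)) (Binv q s n1 n2 n3) a b) (u1, u2, u3) (v1, v2, v3)"
    unfolding Aset_def Lplus_def omult_aux aux_def prod.case by (rule rs_pt[OF u v])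
  show "omult (Aset (n1, n2, n3)) (aux (Binv q s n1 n2 n3)) (Lplus q s emb1 n1) (a, (u1, u2, u3)) (b, (v1, v2, v3))
          = oid (Aset (n1, n2, n3)) (a, (u1, u2, u3)) (b, (v1, v2, v3))"
    unfolding e1 using a b
    apply (elim disjE)
    apply (simp_all only: pushs)
    apply (simp_all only: dl_l dl_l_c dl_r KKi_c[OF s0] KiK_c[OF s0] KKi[OF s0] KiK[OF s0] KF[OF s0 s] KF_c[OF s0 s] KiF[OF s0 s] KiF_c[OF s0 s] finite_atLeastAtMost omult_osc_l omult_osc_r osc_osc tens_osc1 tens_osc2 tens_osc3)
    apply (simp_all only: oadd_def osc_def tens_pt)
    apply (simp_all add: oid_def Aset_def Jset_def rs_def dl_def uv q0 algebra_simps)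
    done
  show "omult (Aset (n1, n2, n3)) (Lplus q s emb1 n1) (aux (Binv q s n1 n2 n3)) (a, (u1, u2, u3)) (b, (v1, v2, v3))
          = oid (Aset (n1, n2, n3)) (a, (u1, u2, u3)) (b, (v1, v2, v3))"
    unfolding e2 using a b
    apply (elim disjE)
    apply (simp_all only: pushs)
    apply (simp_all only: dl_l dl_l_c dl_r KKi_c[OF s0] KiK_c[OF s0] KKi[OF s0] KiK[OF s0] KF[OF s0 s] KF_c[OF s0 s] KiF[OF s0 s] KiF_c[OF s0 s] finite_atLeastAtMost omult_osc_l omult_osc_r osc_osc tens_osc1 tens_osc2 tens_osc3)
    apply (simp_all only: oadd_def osc_def tens_pt)
    apply (simp_all add: oid_def Aset_def Jset_def rs_def dl_def uv q0 algebra_simps)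
    done
qed


lemma oinv_L1:
  fixes q s :: complex
  assumes s: "s ^ 2 = q" and s0: "s \<noteq> 0"
  shows "oinv (Aset (n1, n2, n3)) (Lplus q s emb1 n1) = aux (Binv q s n1 n2 n3)"
proof -
  define I where "I = Aset (n1, n2, n3)"
  define A where "A = Lplus q s emb1 n1"
  define B0 where "B0 = aux (Binv q s n1 n2 n3)"
  have fI: "finite I" unfolding I_def by (rule finite_Aset)
  have Bs: "\<forall>x y. B0 x y \<noteq> 0 \<longrightarrow> x \<in> I \<and> y \<in> I" unfolding B0_def I_def by (rule B_supp)
  have memI: "x \<in> I \<Longrightarrow> \<exists>a u1 u2 u3. x = (a, (u1, u2, u3)) \<and> a \<le> 1 \<and> (u1, u2, u3) \<in> Jset (n1, n2, n3)" for x
    unfolding I_def Aset_def by (cases x) auto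
  have P1: "omult I B0 A = oid I"
  proof (rule ext, rule ext)
    fix x y
    show "omult I B0 A x y = oid I x y"
    proof (cases "x \<in> I \<and> y \<in> I")
      case True
      then obtain a u1 u2 u3 b v1 v2 v3 where x: "x = (a, (u1, u2, u3))" "a \<le> 1" "(u1, u2, u3) \<in> Jset (n1, n2, n3)"
        and y: "y = (b, (v1, v2, v3))" "b \<le> 1" "(v1, v2, v3) \<in> Jset (n1, n2, n3)"
        using memI by meson
      show ?thesis unfolding x y I_def A_def B0_def by (rule P_pt(1)[OF s s0 x(2) y(2) x(3) y(3)])
    next
      case False
      have "omult I B0 A x y = 0"
      proof (cases "x \<in> I")
        case False hence "\<forall>z\<in>I. B0 x z = 0" using Bs by blast
        thus ?thesis by (simp add: omult_def)
      next
        case True hence "y \<notin> I" using \<open>\<not> (x \<in> I \<and> y \<in> I)\<close> by blast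
        thus ?thesis unfolding A_def I_def by (intro om_col0) (auto intro: L1_col)
      qed
      thus ?thesis using False by (auto simp: oid_def)
    qed
  qed
  have P2: "omult I A B0 = oid I"
  proof (rule ext, rule ext)
    fix x y
    show "omult I A B0 x y = oid I x y"
    proof (cases "x \<in> I \<and> y \<in> I")
      case True
      then obtain a u1 u2 u3 b v1 v2 v3 where x: "x = (a, (u1, u2, u3))" "a \<le> 1" "(u1, u2, u3) \<in> Jset (n1, n2, n3)"
        and y: "y = (b, (v1, v2, v3))" "b \<le> 1" "(v1, v2, v3) \<in> Jset (n1, n2, n3)"
        using memI by meson
      show ?thesis unfolding x y I_def A_def B0_def by (rule P_pt(2)[OF s s0 x(2) y(2) x(3) y(3)])
    next
      case False
      have "omult I A B0 x y = 0"
      proof (cases "x \<in> I")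
        case False thus ?thesis unfolding A_def I_def by (intro om_row0) (auto intro: L1_row)
      next
        case True hence "y \<notin> I" using \<open>\<not> (x \<in> I \<and> y \<in> I)\<close> by blast
        hence "\<forall>z\<in>I. B0 z y = 0" using Bs by blast
        thus ?thesis by (simp add: omult_def)
      qed
      thus ?thesis using False by (auto simp: oid_def)
    qed
  qed
  have "oinv I A = B0"
    unfolding oinv_def
  proof (rule the_equality)
    show "(\<forall>x y. B0 x y \<noteq> 0 \<longrightarrow> x \<in> I \<and> y \<in> I) \<and> omult I B0 A = oid I \<and> omult I A B0 = oid I"
      using Bs P1 P2 by blast
  next
    fix B assume h: "(\<forall>x y. B x y \<noteq> 0 \<longrightarrow> x \<in> I \<and> y \<in> I) \<and> omult I B A = oid I \<and> omult I A B = oid I"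
    have "B = omult I B (oid I)" using oid_r[OF fI] h by simp
    also have "\<dots> = omult I B (omult I A B0)" using P2 by simp
    also have "\<dots> = omult I (omult I B A) B0" by (simp add: omult_assoc)
    also have "\<dots> = omult I (oid I) B0" using h by simp
    also have "\<dots> = B0" using oid_l[OF fI Bs] .
    finally show "B = B0" .
  qed
  thus ?thesis unfolding I_def A_def B0_def .
qed

theorem corollaryB2:
  fixes q s :: complex and n1 n2 n3 :: nat
  assumes "s ^ 2 = q" and "q \<noteq> 0" and "\<forall>k::nat. k > 0 \<longrightarrow> q ^ k \<noteq> 1"
  shows "\<forall>u\<in>Jset (n1, n2, n3). \<forall>v\<in>Jset (n1, n2, n3).
           Q23 q s (n1, n2, n3) u v = transfer_RHS q s (n1, n2, n3) u v"
proof (intro ballI)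
  fix u v assume u: "u \<in> Jset (n1, n2, n3)" and v: "v \<in> Jset (n1, n2, n3)"
  have s0: "s \<noteq> 0" using assms(1,2) by auto
  obtain a b c where ue: "u = (a, b, c)" by (cases u) auto
  obtain a' b' c' where ve: "v = (a', b', c')" by (cases v) auto
  show "Q23 q s (n1, n2, n3) u v = transfer_RHS q s (n1, n2, n3) u v"
    unfolding ue ve
    by (rule main[OF assms(1) s0 oinv_L1[OF assms(1) s0]]) (use u v ue ve in auto)
qed

end
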